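(* Fix $q\in[0,1)$. For $n\in\mathbb{N}$ let $\Pi_n$ be $\pi_{n,q}$-distributed and $T_n=\mathrm{BST}(\Pi_n)$. Define $\psi_R:\mathbb{T}\to[0,1]$ by $\psi_R(v)=1$ if $v\in\{1^k:k\ge0\}$ and $\psi_R(v)=0$ otherwise. Then $T_n$ converges to $\psi_R$ with respect to subtree sizes: for every $r\ge1$ and all $v_1,\dots,v_r\in\mathbb{T}$, $$\big(\tau_{T_n}(v_i)\big)_{1\le i\le r}\longrightarrow\big(\psi_R(v_i)\big)_{1\le i\le r}\quad\text{in distribution}.$$
   Context: $\pi_{n,q}(\sigma)=q^{\mathrm{Inv}(\sigma)}/Z_{n,q}$ on $S_n$, $\mathrm{Inv}(\sigma)=|\{i<j:\sigma(i)>\sigma(j)\}|$, $0^0=1$. $\mathbb{T}$ is the set of finite words over $\{0,1\}$ with empty word $\varnothing$; $1^k$ is the word of $k$ ones ($1^0=\varnothing$); $v\mathbb{T}=\{vw:w\in\mathbb{T}\}$. For a finite sequence $x=(x_1,\dots,x_n)$ of distinct numbers, $\mathrm{BST}(x)=\emptyset$ if $n=0$, else $\{\varnothing\}\cup0\,\mathrm{BST}(x_-)\cup1\,\mathrm{BST}(x_+)$ with $x_-$ (resp. $x_+$) the subsequence of entries smaller (resp. larger) than $x_1$ in original order, and $aS=\{aw:w\in S\}$; $\mathrm{BST}(\sigma)=\mathrm{BST}(\sigma(1),\dots,\sigma(n))$. For a finite nonempty binary tree $T\subseteq\mathbb{T}$, $\tau_T(v)=|T\cap v\mathbb{T}|/|T|$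 for $v\in\mathbb{T}$. *)

theory Defs
  imports "HOL-Probability.Probability" "HOL-Combinatorics.Multiset_Permutations"
begin

text \<open>Permutations of {1..n} are represented by their one-line notation
  [sigma(1), ..., sigma(n)] as elements of permutations_of_set {1..n}.\<close>

definition inv_count :: "nat list \<Rightarrow> nat" where
  "inv_count xs = card {(i, j). i < j \<and> j < length xs \<and> xs ! i > xs ! j}"

definition Z_nq :: "real \<Rightarrow> nat \<Rightarrow> real" where
  "Z_nq q n = (\<Sum>\<sigma>\<in>permutations_of_set {1..n}. q ^ inv_count \<sigma>)"

definition pi_nq :: "real \<Rightarrow> nat \<Rightarrow> nat list \<Rightarrow> real" where
  "pi_nq q n \<sigma> = q ^ inv_count \<sigma> / Z_nq q n"

definition mallows :: "real \<Rightarrow> nat \<Rightarrow> nat list measure" where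
  "mallows q n = density (count_space (permutations_of_set {1..n}))
                          (\<lambda>\<sigma>. ennreal (pi_nq q n \<sigma>))"

text \<open>Words over {0,1} are bool lists (False = 0, True = 1).\<close>
fun bst :: "nat list \<Rightarrow> bool list set" where
  "bst [] = {}"
| "bst (x # xs) = insert [] (((#) False) ` bst (filter (\<lambda>y. y < x) xs)
                           \<union> ((#) True) ` bst (filter (\<lambda>y. y > x) xs))"

definition tau :: "bool list set \<Rightarrow> bool list \<Rightarrow> real" where
  "tau T v = real (card (T \<inter> {v @ w | w. True})) / real (card T)"

definition psi_R :: "bool list \<Rightarrow> real" where
  "psi_R v = (if \<exists>k. v = replicate k True then 1 else 0)"

definition conv_in_distr :: "(nat \<Rightarrow> 'a::topological_space measure) \<Rightarrow> 'a measure \<Rightarrow> bool" where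
  "conv_in_distr M mu \<longleftrightarrow>
     (\<forall>f :: 'a \<Rightarrow> real. continuous_on UNIV f \<and> bounded (range f) \<longrightarrow>
        (\<lambda>n. integral\<^sup>L (M n) f) \<longlonglongrightarrow> integral\<^sup>L mu f)"

end

theory Submission
  imports Defs
begin

definition rk :: "nat set \<Rightarrow> nat \<Rightarrow> nat" where
  "rk S x = card {y\<in>S. y < x}"

definition WS :: "real \<Rightarrow> nat set \<Rightarrow> (nat list \<Rightarrow> real) \<Rightarrow> real" where
  "WS q S h = (\<Sum>\<sigma>\<in>permutations_of_set S. q ^ inv_count \<sigma> * h \<sigma>)"

definition qint :: "real \<Rightarrow> nat \<Rightarrow> real" where
  "qint q m = (\<Sum>i<m. q ^ i)"

fun Zc :: "real \<Rightarrow> nat \<Rightarrow> real" where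
  "Zc q 0 = 1"
| "Zc q (Suc m) = qint q (Suc m) * Zc q m"

lemma rk_less_card: "finite S \<Longrightarrow> x \<in> S \<Longrightarrow> rk S x < card S"
  unfolding rk_def by (rule psubset_card_mono) auto

lemma rk_mono: "finite S \<Longrightarrow> x \<in> S \<Longrightarrow> x < y \<Longrightarrow> rk S x < rk S y"
  unfolding rk_def by (rule psubset_card_mono) auto

lemma rk_bij: assumes "finite S" shows "bij_betw (rk S) S {..<card S}"
proof -
  have inj: "inj_on (rk S) S"
  proof (rule inj_onI)
    fix x y assume "x \<in> S" "y \<in> S" "rk S x = rk S y"
    then show "x = y" using rk_mono[OF assms, of x y] rk_mono[OF assms, of y x]
      by (metis less_irrefl linorder_neqE_nat)
  qed
  have sub: "rk S ` S \<subseteq> {..<card S}" using rk_less_card[OF assms] by auto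
  have "card (rk S ` S) = card {..<card S}" using card_image[OF inj] by simp
  then have "rk S ` S = {..<card S}" using sub by (intro card_subset_eq) auto
  then show ?thesis using inj by (simp add: bij_betw_def)
qed

lemma sum_rk: "finite S \<Longrightarrow> (\<Sum>x\<in>S. g (rk S x)) = (\<Sum>i<card S. g i)"
  using sum.reindex_bij_betw[OF rk_bij, of S g] by simp

lemma inv_count_Cons:
  assumes "distinct xs"
  shows "inv_count (x # xs) = card {y\<in>set xs. y < x} + inv_count xs"
proof -
  let ?A = "(\<lambda>j. (0::nat, Suc j)) ` {j. j < length xs \<and> xs ! j < x}"
  let ?B = "(\<lambda>(i,j). (Suc i, Suc j)) ` {(i, j). i < j \<and> j < length xs \<and> xs ! i > xs ! j}"
  have eq: "{(i, j). i < j \<and> j < length (x#xs) \<and> (x#xs) ! i > (x#xs) ! j} = ?A \<union> ?B"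
  proof (rule set_eqI, clarify)
    fix i j
    show "((i, j) \<in> {(i, j). i < j \<and> j < length (x#xs) \<and> (x#xs) ! i > (x#xs) ! j}) = ((i, j) \<in> ?A \<union> ?B)"
      by (cases i; cases j) (auto simp: image_iff)
  qed
  have d: "?A \<inter> ?B = {}" by auto
  have fA: "finite {j. j < length xs \<and> xs ! j < x}" by simp
  have fB: "finite {(i, j). i < j \<and> j < length xs \<and> xs ! i > xs ! j}"
    by (rule finite_subset[of _ "{..<length xs} \<times> {..<length xs}"]) auto
  have cA: "card ?A = card {j. j < length xs \<and> xs ! j < x}"
    by (rule card_image) (auto simp: inj_on_def)
  have cB: "card ?B = inv_count xs" unfolding inv_count_def
    by (rule card_image) (auto simp: inj_on_def)
  have "card {j. j < length xs \<and> xs ! j < x} = card ((!) xs ` {j. j < length xs \<and> xs ! j < x})"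
    using assms by (intro card_image[symmetric]) (auto simp: inj_on_def nth_eq_iff_index_eq)
  also have "(!) xs ` {j. j < length xs \<and> xs ! j < x} = {y\<in>set xs. y < x}"
    by (auto simp: in_set_conv_nth)
  finally have c2: "card {j. j < length xs \<and> xs ! j < x} = card {y\<in>set xs. y < x}" .
  show ?thesis unfolding inv_count_def[of "x#xs"] eq
    using card_Un_disjoint[OF finite_imageI[OF fA] finite_imageI[OF fB] d] cA cB c2
    unfolding inv_count_def by simp
qed

lemma WS_decomp:
  assumes "finite S" "S \<noteq> {}"
  shows "WS q S h = (\<Sum>x\<in>S. q ^ rk S x * WS q (S - {x}) (\<lambda>\<tau>. h (x # \<tau>)))"
proof -
  have "WS q S h = (\<Sum>\<sigma>\<in>(\<Union>x\<in>S. (\<lambda>xs. x # xs) ` permutations_of_set (S - {x})). q ^ inv_count \<sigma> * h \<sigma>)"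
    unfolding WS_def using permutations_of_set_nonempty[OF assms(2)] by simp
  also have "\<dots> = (\<Sum>x\<in>S. \<Sum>\<sigma>\<in>(\<lambda>xs. x # xs) ` permutations_of_set (S - {x}). q ^ inv_count \<sigma> * h \<sigma>)"
    using assms(1) by (intro sum.UNION_disjoint) auto
  also have "\<dots> = (\<Sum>x\<in>S. \<Sum>\<tau>\<in>permutations_of_set (S - {x}). q ^ inv_count (x # \<tau>) * h (x # \<tau>))"
    by (rule sum.cong[OF refl], subst sum.reindex) (auto simp: inj_on_def)
  also have "\<dots> = (\<Sum>x\<in>S. q ^ rk S x * WS q (S - {x}) (\<lambda>\<tau>. h (x # \<tau>)))"
    unfolding WS_def sum_distrib_left
  proof (intro sum.cong refl)
    fix x \<tau> assume x: "x \<in> S" and t: "\<tau> \<in> permutations_of_set (S - {x})"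
    have "inv_count (x # \<tau>) = rk S x + inv_count \<tau>"
    proof -
      have "{y\<in>set \<tau>. y < x} = {y\<in>S. y < x}" using permutations_of_setD(1)[OF t] x by auto
      then show ?thesis using inv_count_Cons[OF permutations_of_setD(2)[OF t], of x] unfolding rk_def by simp
    qed
    then show "q ^ inv_count (x # \<tau>) * h (x # \<tau>) = q ^ rk S x * (q ^ inv_count \<tau> * h (x # \<tau>))"
      by (simp add: power_add)
  qed
  finally show ?thesis .
qed

lemma WS_empty[simp]: "WS q {} g = g []"
  by (simp add: WS_def inv_count_def)

lemma qint_add: "qint q (l + b) = qint q l + q ^ l * qint q b"
  by (induct b) (simp_all add: qint_def algebra_simps power_add)

lemma qint_ge1: "0 \<le> q \<Longrightarrow> m \<ge> 1 \<Longrightarrow> qint q m \<ge> 1"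
proof -
  assume q: "0 \<le> q" and m: "m \<ge> 1"
  have "qint q m = 1 + (\<Sum>i\<in>{..<m}-{0}. q ^ i)" unfolding qint_def
    using m by (subst sum.remove[of _ 0]) auto
  moreover have "(\<Sum>i\<in>{..<m}-{0}. q ^ i) \<ge> 0" using q by (intro sum_nonneg) auto
  ultimately show ?thesis by simp
qed

lemma Zc_pos: "0 \<le> q \<Longrightarrow> Zc q m > 0"
proof (induct m)
  case (Suc m) then show ?case using qint_ge1[of q "Suc m"] by simp
qed simp

lemma WS_one: "finite S \<Longrightarrow> WS q S (\<lambda>_. 1) = Zc q (card S)"
proof (induction "card S" arbitrary: S)
  case 0 then show ?case by simp
next
  case (Suc n)
  then have ne: "S \<noteq> {}" by auto
  have "WS q S (\<lambda>_. 1) = (\<Sum>x\<in>S. q ^ rk S x * WS q (S - {x}) (\<lambda>_. 1))"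
    using WS_decomp[OF Suc(3) ne] by simp
  also have "\<dots> = (\<Sum>x\<in>S. q ^ rk S x * Zc q n)"
  proof (intro sum.cong refl)
    fix x assume "x \<in> S"
    then have "card (S - {x}) = n" using Suc(2) by simp
    then show "q ^ rk S x * WS q (S - {x}) (\<lambda>_. 1) = q ^ rk S x * Zc q n"
      using Suc(1)[of "S - {x}"] Suc(3) by simp
  qed
  also have "\<dots> = qint q (card S) * Zc q n"
    unfolding sum_distrib_right[symmetric] sum_rk[OF Suc(3), of "\<lambda>i. q ^ i"] qint_def ..
  finally show ?case using Suc(2) by (metis Zc.simps(2))
qed

lemma filter_lemma:
  assumes "finite A"
  shows "Zc q (card {y\<in>A. m < y}) * WS q A (\<lambda>\<tau>. h (filter (\<lambda>y. m < y) \<tau>))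
         = Zc q (card A) * WS q {y\<in>A. m < y} h"
  using assms
proof (induction "card A" arbitrary: A h)
  case 0 then show ?case by simp
next
  case (Suc n)
  define B where "B = {y\<in>A. m < y}"
  define L where "L = {y\<in>A. \<not> m < y}"
  let ?f = "filter (\<lambda>y. m < y)"
  have fin: "finite B" "finite L" using Suc(3) by (auto simp: B_def L_def)
  have AU: "A = L \<union> B" and disj: "L \<inter> B = {}" by (auto simp: B_def L_def)
  have cardA: "card A = card L + card B" using card_Un_disjoint[OF fin(2,1) disj] AU by simp
  have ne: "A \<noteq> {}" using Suc by auto
  have "WS q A (\<lambda>\<tau>. h (?f \<tau>)) = (\<Sum>x\<in>A. q ^ rk A x * WS q (A - {x}) (\<lambda>\<tau>. h (?f (x # \<tau>))))"
    by (rule WS_decomp[OF Suc(3) ne])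
  also have "\<dots> = (\<Sum>x\<in>L. q ^ rk A x * WS q (A - {x}) (\<lambda>\<tau>. h (?f (x # \<tau>))))
      + (\<Sum>x\<in>B. q ^ rk A x * WS q (A - {x}) (\<lambda>\<tau>. h (?f (x # \<tau>))))"
    unfolding AU by (rule sum.union_disjoint[OF fin(2,1) disj])
  finally have split: "Zc q (card B) * WS q A (\<lambda>\<tau>. h (?f \<tau>)) =
      (\<Sum>x\<in>L. Zc q (card B) * (q ^ rk A x * WS q (A - {x}) (\<lambda>\<tau>. h (?f (x # \<tau>)))))
      + (\<Sum>x\<in>B. Zc q (card B) * (q ^ rk A x * WS q (A - {x}) (\<lambda>\<tau>. h (?f (x # \<tau>)))))"
    by (simp add: algebra_simps sum_distrib_left)
  have partL: "(\<Sum>x\<in>L. Zc q (card B) * (q ^ rk A x * WS q (A - {x}) (\<lambda>\<tau>. h (?f (x # \<tau>)))))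
      = Zc q n * WS q B h * qint q (card L)"
  proof -
    have "(\<Sum>x\<in>L. Zc q (card B) * (q ^ rk A x * WS q (A - {x}) (\<lambda>\<tau>. h (?f (x # \<tau>)))))
        = (\<Sum>x\<in>L. Zc q n * WS q B h * q ^ rk L x)"
    proof (intro sum.cong refl)
      fix x assume x: "x \<in> L"
      have B': "{y\<in>A - {x}. m < y} = B" using x by (auto simp: B_def L_def)
      have cA': "card (A - {x}) = n" using Suc(2) x AU by auto
      have IH: "Zc q (card B) * WS q (A - {x}) (\<lambda>\<tau>. h (?f \<tau>)) = Zc q n * WS q B h"
        using Suc(1)[of "A - {x}" h] cA' B' Suc(3) by simp
      have rkx: "rk A x = rk L x" unfolding rk_def using x by (intro arg_cong[where f=card]) (auto simp: L_def)
      show "Zc q (card B) * (q ^ rk A x * WS q (A - {x}) (\<lambda>\<tau>. h (?f (x # \<tau>)))) = Zc q n * WS q B h * q ^ rk L x"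
        using x IH rkx by (simp add: L_def algebra_simps)
    qed
    also have "\<dots> = Zc q n * WS q B h * qint q (card L)"
      unfolding sum_distrib_left[symmetric] sum_rk[OF fin(2), of "\<lambda>i. q ^ i"] qint_def ..
    finally show ?thesis .
  qed
  have partB: "(\<Sum>x\<in>B. Zc q (card B) * (q ^ rk A x * WS q (A - {x}) (\<lambda>\<tau>. h (?f (x # \<tau>)))))
      = q ^ card L * qint q (card B) * Zc q n * WS q B h"
  proof (cases "B = {}")
    case True then show ?thesis by (simp add: qint_def)
  next
    case False
    then have cB: "card B = Suc (card B - 1)" using fin(1) by (simp add: card_gt_0_iff)
    have "(\<Sum>x\<in>B. Zc q (card B) * (q ^ rk A x * WS q (A - {x}) (\<lambda>\<tau>. h (?f (x # \<tau>)))))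
        = (\<Sum>x\<in>B. q ^ card L * qint q (card B) * Zc q n * (q ^ rk B x * WS q (B - {x}) (\<lambda>\<beta>. h (x # \<beta>))))"
    proof (intro sum.cong refl)
      fix x assume x: "x \<in> B"
      have B': "{y\<in>A - {x}. m < y} = B - {x}" using x by (auto simp: B_def)
      have cA': "card (A - {x}) = n" using Suc(2) x AU by auto
      have cB': "card (B - {x}) = card B - 1" using x fin by simp
      have IH: "Zc q (card B - 1) * WS q (A - {x}) (\<lambda>\<tau>. h (x # ?f \<tau>)) = Zc q n * WS q (B - {x}) (\<lambda>\<beta>. h (x # \<beta>))"
        using Suc(1)[of "A - {x}" "\<lambda>\<beta>. h (x # \<beta>)"] cA' B' cB' Suc(3) by simp
      have "{y\<in>A. y < x} = L \<union> {y\<in>B. y < x}" using x by (auto simp: B_def L_def)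
      then have rkx: "rk A x = card L + rk B x" unfolding rk_def
        using card_Un_disjoint[OF fin(2), of "{y\<in>B. y < x}"] fin(1) disj by auto
      have ZB: "Zc q (card B) = qint q (card B) * Zc q (card B - 1)" using cB by (metis Zc.simps(2))
      show "Zc q (card B) * (q ^ rk A x * WS q (A - {x}) (\<lambda>\<tau>. h (?f (x # \<tau>))))
          = q ^ card L * qint q (card B) * Zc q n * (q ^ rk B x * WS q (B - {x}) (\<lambda>\<beta>. h (x # \<beta>)))"
      proof -
        have fx: "(\<lambda>\<tau>. h (?f (x # \<tau>))) = (\<lambda>\<tau>. h (x # ?f \<tau>))" using x by (simp add: B_def)
        have "Zc q (card B) * (q ^ rk A x * WS q (A - {x}) (\<lambda>\<tau>. h (?f (x # \<tau>))))
            = q ^ card L * q ^ rk B x * qint q (card B) * (Zc q (card B - 1) * WS q (A - {x}) (\<lambda>\<tau>. h (x # ?f \<tau>)))"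
          unfolding fx ZB rkx power_add by (simp only: ac_simps)
        also have "\<dots> = q ^ card L * q ^ rk B x * qint q (card B) * (Zc q n * WS q (B - {x}) (\<lambda>\<beta>. h (x # \<beta>)))"
          unfolding IH ..
        finally show ?thesis by (simp only: ac_simps)
      qed
    qed
    also have "\<dots> = q ^ card L * qint q (card B) * Zc q n * WS q B h"
      unfolding sum_distrib_left[symmetric] WS_decomp[OF fin(1) False] ..
    finally show ?thesis .
  qed
  have "Zc q (card B) * WS q A (\<lambda>\<tau>. h (?f \<tau>)) = Zc q n * WS q B h * (qint q (card L) + q ^ card L * qint q (card B))"
    using split partL partB by (simp add: algebra_simps)
  also have "\<dots> = Zc q (card A) * WS q B h"
  proof -
    have "qint q (card L) + q ^ card L * qint q (card B) = qint q (Suc n)"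
      using Suc(2) cardA qint_add[of q "card L" "card B"] by simp
    then show ?thesis using Suc(2)[symmetric] by simp
  qed
  finally show ?case by (simp add: B_def)
qed

definition pre :: "bool list \<Rightarrow> bool list set" where
  "pre v = {v @ w | w. True}"

lemma bst_finite_card: "distinct xs \<Longrightarrow> finite (bst xs) \<and> card (bst xs) = length xs"
proof (induction xs rule: bst.induct)
  case 1 then show ?case by simp
next
  case (2 x xs)
  let ?L = "filter (\<lambda>y. y < x) xs" and ?R = "filter (\<lambda>y. x < y) xs"
  have dL: "distinct ?L" and dR: "distinct ?R" using 2(3) by auto
  have IL: "finite (bst ?L)" "card (bst ?L) = length ?L" using 2(1) dL by auto
  have IR: "finite (bst ?R)" "card (bst ?R) = length ?R" using 2(2) dR by auto
  have fR: "?R = filter (\<lambda>y. \<not> y < x) xs"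
  proof (intro filter_cong refl)
    fix y assume "y \<in> set xs"
    then have "y \<noteq> x" using 2(3) by auto
    then show "(x < y) = (\<not> y < x)" by auto
  qed
  have len: "length ?L + length ?R = length xs" unfolding fR by (rule sum_length_filter_compl)
  have c1: "card ((#) False ` bst ?L) = card (bst ?L)" by (rule card_image) (auto simp: inj_on_def)
  have c2: "card ((#) True ` bst ?R) = card (bst ?R)" by (rule card_image) (auto simp: inj_on_def)
  have d: "(#) False ` bst ?L \<inter> (#) True ` bst ?R = {}" by auto
  have fU: "finite ((#) False ` bst ?L \<union> (#) True ` bst ?R)" using IL IR by auto
  have nin: "[] \<notin> (#) False ` bst ?L \<union> (#) True ` bst ?R" by auto
  have "card (bst (x # xs)) = Suc (card ((#) False ` bst ?L \<union> (#) True ` bst ?R))"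
    using card_insert_disjoint[OF fU nin] by simp
  also have "\<dots> = Suc (length xs)"
    using card_Un_disjoint[OF _ _ d] IL IR c1 c2 len by simp
  finally show ?case using fU by simp
qed

lemma pre_Nil[simp]: "pre [] = UNIV" by (auto simp: pre_def)

lemma bst_right: "bst (x # xs) \<inter> pre (True # u) = (#) True ` (bst (filter (\<lambda>y. x < y) xs) \<inter> pre u)"
  by (auto simp: pre_def)

definition Dk :: "nat \<Rightarrow> nat list \<Rightarrow> real" where
  "Dk k \<sigma> = real (length \<sigma>) - real (card (bst \<sigma> \<inter> pre (replicate k True)))"

lemma WS_cong: "(\<And>\<sigma>. \<sigma> \<in> permutations_of_set S \<Longrightarrow> h \<sigma> = g \<sigma>) \<Longrightarrow> WS q S h = WS q S g"
  unfolding WS_def by (intro sum.cong refl) auto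

lemma WS_mono: "0 \<le> q \<Longrightarrow> (\<And>\<sigma>. \<sigma> \<in> permutations_of_set S \<Longrightarrow> h \<sigma> \<le> g \<sigma>) \<Longrightarrow> WS q S h \<le> WS q S g"
  unfolding WS_def by (intro sum_mono mult_left_mono) auto

lemma WS_add_const: "WS q S (\<lambda>\<sigma>. c + h \<sigma>) = c * WS q S (\<lambda>_. 1) + WS q S h"
  unfolding WS_def by (simp add: algebra_simps sum.distrib sum_distrib_left)

lemma Dk_0: "distinct \<sigma> \<Longrightarrow> Dk 0 \<sigma> = 0"
  using bst_finite_card[of \<sigma>] by (simp add: Dk_def)

lemma Dk_Suc_Cons:
  assumes "finite S" "x \<in> S" "\<tau> \<in> permutations_of_set (S - {x})"
  shows "Dk (Suc k) (x # \<tau>) = real (rk S x + 1) + Dk k (filter (\<lambda>y. x < y) \<tau>)"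
proof -
  let ?R = "filter (\<lambda>y. x < y) \<tau>"
  have st: "set \<tau> = S - {x}" "distinct \<tau>" using permutations_of_setD[OF assms(3)] by auto
  have c: "card (bst (x # \<tau>) \<inter> pre (replicate (Suc k) True)) = card (bst ?R \<inter> pre (replicate k True))"
    unfolding replicate_Suc bst_right by (rule card_image) (auto simp: inj_on_def)
  have lR: "length ?R = card {y\<in>S. x < y}"
  proof -
    have "length ?R = card (set ?R)" using st(2) distinct_card[of ?R] by simp
    also have "set ?R = {y\<in>S. x < y}" using st(1) assms(2) by auto
    finally show ?thesis .
  qed
  have lt: "length \<tau> = card S - 1" using st assms by (metis distinct_card card_Diff_singleton)
  have SU: "S = {y\<in>S. y < x} \<union> ({x} \<union> {y\<in>S. x < y})" using assms(2) by auto
  have A: "card ({x} \<union> {y\<in>S. x < y}) = 1 + card {y\<in>S. x < y}"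
    by (subst card_Un_disjoint) (use assms(1) in auto)
  have B: "card ({y\<in>S. y < x} \<union> ({x} \<union> {y\<in>S. x < y})) = card {y\<in>S. y < x} + card ({x} \<union> {y\<in>S. x < y})"
    by (rule card_Un_disjoint) (use assms(1) in auto)
  have "card S = card {y\<in>S. y < x} + 1 + card {y\<in>S. x < y}"
    using A B SU by simp
  then show ?thesis unfolding Dk_def c using lR lt assms
    by (simp add: rk_def)
qed

lemma sum_iq_identity:
  "(1 - q)^2 * (\<Sum>i<m. q ^ i * (real i + 1)) = 1 - (real m + 1) * q ^ m + real m * q ^ (m + 1)"
  by (induct m) (simp_all add: algebra_simps power2_eq_square)

lemma sum_iq_bound:
  assumes "0 \<le> q" "q < 1"
  shows "(\<Sum>i<m. q ^ i * (real i + 1)) \<le> 1 / (1 - q)^2"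
proof -
  have "(real m + 1) * q ^ m - real m * q ^ (m + 1) = q ^ m * (1 + real m * (1 - q))"
    by (simp add: algebra_simps)
  also have "\<dots> \<ge> 0" using assms by simp
  finally have "(1 - q)^2 * (\<Sum>i<m. q ^ i * (real i + 1)) \<le> 1"
    unfolding sum_iq_identity by simp
  moreover have "(1 - q)^2 > 0" using assms by simp
  ultimately show ?thesis by (simp add: field_simps mult.commute)
qed

definition CC :: "real \<Rightarrow> real" where "CC q = 1 / (1 - q)^2"

lemma Dk_bound:
  assumes q: "0 \<le> q" "q < 1" and S: "finite S"
  shows "WS q S (Dk k) \<le> real k * CC q * Zc q (card S)"
  using S
proof (induction k arbitrary: S)
  case 0
  have "WS q S (Dk 0) = WS q S (\<lambda>_. 0)"
    by (rule WS_cong) (auto simp: Dk_0 dest: permutations_of_setD)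
  then show ?case by (simp add: WS_def)
next
  case (Suc k)
  have C0: "CC q \<ge> 0" unfolding CC_def by simp
  show ?case
  proof (cases "S = {}")
    case True then show ?thesis using C0 by (simp add: Dk_def)
  next
    case ne: False
    define n where "n = card S - 1"
    have cS: "card S = Suc n" using ne Suc(2) by (simp add: n_def card_gt_0_iff)
    have step: "WS q (S - {x}) (\<lambda>\<tau>. Dk (Suc k) (x # \<tau>)) \<le> Zc q n * (real (rk S x) + 1 + real k * CC q)"
      if x: "x \<in> S" for x
    proof -
      let ?B = "{y\<in>S - {x}. x < y}"
      have cx: "card (S - {x}) = n" using cS x Suc(2) by simp
      have "WS q (S - {x}) (\<lambda>\<tau>. Dk (Suc k) (x # \<tau>)) =
            WS q (S - {x}) (\<lambda>\<tau>. real (rk S x + 1) + Dk k (filter (\<lambda>y. x < y) \<tau>))"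
        by (rule WS_cong) (rule Dk_Suc_Cons[OF Suc(2) x])
      also have "\<dots> = real (rk S x + 1) * Zc q n + WS q (S - {x}) (\<lambda>\<tau>. Dk k (filter (\<lambda>y. x < y) \<tau>))"
        unfolding WS_add_const WS_one[OF finite_Diff[OF Suc(2)]] cx ..
      also have "WS q (S - {x}) (\<lambda>\<tau>. Dk k (filter (\<lambda>y. x < y) \<tau>)) \<le> Zc q n * (real k * CC q)"
      proof -
        have fl: "Zc q (card ?B) * WS q (S - {x}) (\<lambda>\<tau>. Dk k (filter (\<lambda>y. x < y) \<tau>)) = Zc q n * WS q ?B (Dk k)"
          using filter_lemma[OF finite_Diff[OF Suc(2), of "{x}"], where q=q and m=x and h="Dk k"] cx by simp
        have IH: "WS q ?B (Dk k) \<le> real k * CC q * Zc q (card ?B)"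
          using Suc(1) Suc(2) by simp
        have pB: "Zc q (card ?B) > 0" "Zc q n > 0" using Zc_pos[OF q(1)] by auto
        have "Zc q (card ?B) * WS q (S - {x}) (\<lambda>\<tau>. Dk k (filter (\<lambda>y. x < y) \<tau>)) \<le> Zc q (card ?B) * (Zc q n * (real k * CC q))"
          unfolding fl using mult_left_mono[OF IH less_imp_le[OF pB(2)]] by (simp add: ac_simps)
        then show ?thesis using pB(1) by simp
      qed
      finally show ?thesis by (simp add: algebra_simps)
    qed
    have "WS q S (Dk (Suc k)) = (\<Sum>x\<in>S. q ^ rk S x * WS q (S - {x}) (\<lambda>\<tau>. Dk (Suc k) (x # \<tau>)))"
      by (rule WS_decomp[OF Suc(2) ne])
    also have "\<dots> \<le> (\<Sum>x\<in>S. q ^ rk S x * (Zc q n * (real (rk S x) + 1 + real k * CC q)))"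
      using step q by (intro sum_mono mult_left_mono) auto
    also have "\<dots> = Zc q n * (\<Sum>i<card S. q ^ i * (real i + 1) + q ^ i * (real k * CC q))"
      using sum_rk[OF Suc(2), of "\<lambda>i. q ^ i * (Zc q n * (real i + 1 + real k * CC q))"]
      by (simp add: sum_distrib_left algebra_simps)
    also have "\<dots> = Zc q n * ((\<Sum>i<card S. q ^ i * (real i + 1)) + real k * CC q * qint q (card S))"
      by (simp add: sum.distrib qint_def sum_distrib_left sum_distrib_right algebra_simps)
    also have "\<dots> \<le> Zc q n * (CC q * qint q (card S) + real k * CC q * qint q (card S))"
    proof -
      have "(\<Sum>i<card S. q ^ i * (real i + 1)) \<le> CC q" using sum_iq_bound[OF q] unfolding CC_def .
      also have "\<dots> \<le> CC q * qint q (card S)" using qint_ge1[OF q(1), of "card S"] cS C0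
        by (simp add: mult_left_mono[of 1 _ "CC q", simplified])
      finally show ?thesis using Zc_pos[OF q(1), of n] by simp
    qed
    also have "\<dots> = real (Suc k) * CC q * Zc q (card S)"
      unfolding cS by (simp add: algebra_simps)
    finally show ?thesis .
  qed
qed

definition mv :: "bool list \<Rightarrow> nat" where
  "mv v = (if \<exists>k. v = replicate k True then length v else Suc (length (takeWhile id v)))"

lemma tau_bound:
  assumes d: "distinct \<sigma>" and n: "length \<sigma> = n" "n > 0"
  shows "\<bar>tau (bst \<sigma>) v - psi_R v\<bar> \<le> Dk (mv v) \<sigma> / real n"
proof -
  let ?T = "bst \<sigma>"
  have fT: "finite ?T" and cT: "card ?T = n" using bst_finite_card[OF d] n by auto
  have np: "real n > 0" using n by simp
  show ?thesis
  proof (cases "\<exists>k. v = replicate k True")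
    case True
    then obtain k where vk: "v = replicate k True" by auto
    then have mvv: "mv v = k" by (simp add: mv_def)
    have le: "card (?T \<inter> pre v) \<le> n" using cT fT by (metis card_mono inf_le1)
    have "\<bar>tau ?T v - psi_R v\<bar> = \<bar>real (card (?T \<inter> pre v)) / real n - 1\<bar>"
      using True cT by (simp add: tau_def psi_R_def pre_def)
    also have "\<dots> = (real n - real (card (?T \<inter> pre v))) / real n"
      using le np by (simp add: field_simps)
    finally show ?thesis unfolding Dk_def mvv using n vk by simp
  next
    case False
    then have psi0: "psi_R v = 0" by (simp add: psi_R_def)
    let ?u = "takeWhile id v"
    define j where "j = length ?u"
    have u: "?u = replicate j True" unfolding j_def
      by (rule replicate_eqI) (auto dest: set_takeWhileD)
    have dne: "dropWhile id v \<noteq> []"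
    proof
      assume "dropWhile id v = []"
      then have "v = ?u" using takeWhile_dropWhile_id[of id v] by (metis append_Nil2)
      then show False using False u by metis
    qed
    then obtain w where dw: "dropWhile id v = False # w"
      using hd_dropWhile[OF dne] by (cases "dropWhile id v") auto
    have vdec: "v = replicate j True @ False # w"
      using takeWhile_dropWhile_id[of id v] u dw by simp
    have mvv: "mv v = Suc j" using False by (simp add: mv_def j_def)
    have sub: "pre v \<subseteq> pre (replicate j True @ [False])" unfolding vdec pre_def by auto
    have disj: "(?T \<inter> pre (replicate j True @ [False])) \<inter> (?T \<inter> pre (replicate j True @ [True])) = {}"
      unfolding pre_def by auto
    have "card (?T \<inter> pre (replicate j True @ [False])) + card (?T \<inter> pre (replicate j True @ [True]))
        = card ((?T \<inter> pre (replicate j True @ [False])) \<union> (?T \<inter> pre (replicate j True @ [True])))"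
      using fT disj by (intro card_Un_disjoint[symmetric]) auto
    also have "\<dots> \<le> n" unfolding cT[symmetric] by (intro card_mono[OF fT]) auto
    finally have s1: "card (?T \<inter> pre (replicate j True @ [False])) + card (?T \<inter> pre (replicate (Suc j) True)) \<le> n"
      by (simp add: replicate_append_same)
    have s2: "card (?T \<inter> pre v) \<le> card (?T \<inter> pre (replicate j True @ [False]))"
      using sub fT by (intro card_mono) auto
    have "\<bar>tau ?T v - psi_R v\<bar> = real (card (?T \<inter> pre v)) / real n"
      using psi0 cT by (simp add: tau_def pre_def)
    also have "\<dots> \<le> Dk (mv v) \<sigma> / real n"
      unfolding Dk_def mvv using s1 s2 n np by (intro divide_right_mono) auto
    finally show ?thesis .
  qed
qed

lemma Z_nq_eq: "Z_nq q n = Zc q n"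
  using WS_one[of "{1..n}" q] by (simp add: Z_nq_def WS_def)

lemma expect_bound:
  assumes q: "0 \<le> q" "q < 1" and n: "n > 0"
  shows "(\<Sum>\<sigma>\<in>permutations_of_set {1..n}. pi_nq q n \<sigma> * \<bar>tau (bst \<sigma>) v - psi_R v\<bar>) \<le> real (mv v) * CC q / real n"
proof -
  have Zp: "Zc q n > 0" using Zc_pos[OF q(1)] .
  have "(\<Sum>\<sigma>\<in>permutations_of_set {1..n}. pi_nq q n \<sigma> * \<bar>tau (bst \<sigma>) v - psi_R v\<bar>)
     \<le> (\<Sum>\<sigma>\<in>permutations_of_set {1..n}. pi_nq q n \<sigma> * (Dk (mv v) \<sigma> / real n))"
  proof (intro sum_mono mult_left_mono)
    fix \<sigma> assume s: "\<sigma> \<in> permutations_of_set {1..n}"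
    have "length \<sigma> = n" using permutations_of_setD[OF s] by (metis card_atLeastAtMost diff_Suc_1 distinct_card)
    then show "\<bar>tau (bst \<sigma>) v - psi_R v\<bar> \<le> Dk (mv v) \<sigma> / real n"
      using tau_bound permutations_of_setD(2)[OF s] n by blast
    show "0 \<le> pi_nq q n \<sigma>" using Zp q by (simp add: pi_nq_def Z_nq_eq)
  qed
  also have "\<dots> = WS q {1..n} (Dk (mv v)) / (Zc q n * real n)"
    by (simp add: WS_def pi_nq_def Z_nq_eq sum_divide_distrib)
  also have "\<dots> \<le> real (mv v) * CC q * Zc q n / (Zc q n * real n)"
    using Dk_bound[OF q, of "{1..n}" "mv v"] Zp n by (intro divide_right_mono) auto
  also have "\<dots> = real (mv v) * CC q / real n" using Zp by simp
  finally show ?thesis .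
qed

theorem theorem1p5:
  fixes q :: real and v :: "bool list ^ 'r"
  assumes "0 \<le> q" and "q < 1"
  shows "conv_in_distr
           (\<lambda>n. distr (mallows q n) borel (\<lambda>\<sigma>. \<chi> i. tau (bst \<sigma>) (v $ i)))
           (return borel (\<chi> i. psi_R (v $ i)))"
proof -
  note q = assms
  define P where "P n = permutations_of_set {1..n::nat}" for n
  define X where "X \<sigma> = (\<chi> i. tau (bst \<sigma>) (v $ i))" for \<sigma>
  define c where "c = (\<chi> i. psi_R (v $ i))"
  have finP: "finite (P n)" for n by (simp add: P_def)
  have pinn: "pi_nq q n \<sigma> \<ge> 0" for n \<sigma>
    using Zc_pos[OF q(1), of n] q(1) by (simp add: pi_nq_def Z_nq_eq)
  have pisum: "(\<Sum>\<sigma>\<in>P n. pi_nq q n \<sigma>) = 1" for n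
  proof -
    have "(\<Sum>\<sigma>\<in>P n. pi_nq q n \<sigma>) = Z_nq q n / Z_nq q n"
      unfolding pi_nq_def sum_divide_distrib[symmetric] P_def Z_nq_def[symmetric] ..
    then show ?thesis using Zc_pos[OF q(1), of n] by (simp add: Z_nq_eq)
  qed
  have int_eq: "integral\<^sup>L (distr (mallows q n) borel X) f = (\<Sum>\<sigma>\<in>P n. pi_nq q n \<sigma> * f (X \<sigma>))"
    if fm: "f \<in> borel_measurable borel" for f n
  proof -
    have Xm: "X \<in> measurable (mallows q n) borel" by (simp add: mallows_def)
    have "integral\<^sup>L (distr (mallows q n) borel X) f = integral\<^sup>L (mallows q n) (\<lambda>\<sigma>. f (X \<sigma>))"
      by (rule integral_distr[OF Xm fm])
    also have "\<dots> = integral\<^sup>L (count_space (P n)) (\<lambda>\<sigma>. pi_nq q n \<sigma> *\<^sub>R f (X \<sigma>))"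
      unfolding mallows_def P_def by (rule integral_density) (auto simp: pinn)
    also have "\<dots> = (\<Sum>\<sigma>\<in>P n. pi_nq q n \<sigma> * f (X \<sigma>))"
      by (simp add: lebesgue_integral_count_space_finite[OF finP])
    finally show ?thesis .
  qed
  have Ebound: "(\<Sum>\<sigma>\<in>P n. pi_nq q n \<sigma> * \<bar>X \<sigma> $ i - c $ i\<bar>) \<le> real (mv (v $ i)) * CC q / real n"
    if "n > 0" for n i
    using expect_bound[OF q that, of "v $ i"] by (simp add: P_def X_def c_def)
  show ?thesis
    unfolding conv_in_distr_def X_def[symmetric] c_def[symmetric]
  proof (intro allI impI)
    fix f :: "real ^ 'r \<Rightarrow> real"
    assume f: "continuous_on UNIV f \<and> bounded (range f)"
    have fm: "f \<in> borel_measurable borel" using f borel_measurable_continuous_onI by blast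
    have ret: "integral\<^sup>L (return borel c) f = f c" by (rule integral_return) (auto simp: fm)
    obtain B where B: "\<And>y. \<bar>f y\<bar> \<le> B" using f unfolding bounded_iff by auto
    have B0: "B \<ge> 0" using B[of c] by simp
    have cont: "isCont f c" using f continuous_on_eq_continuous_at[of UNIV f] by auto
    show "(\<lambda>n. integral\<^sup>L (distr (mallows q n) borel X) f) \<longlonglongrightarrow> integral\<^sup>L (return borel c) f"
      unfolding ret int_eq[OF fm]
    proof (rule LIMSEQ_I)
      fix r :: real assume r: "r > 0"
      obtain d where d: "d > 0" "\<And>y. dist y c < d \<Longrightarrow> dist (f y) (f c) < r / 2"
        using cont r unfolding continuous_at_eps_delta by (metis half_gt_zero)
      define K where "K = 2 * B / d * (\<Sum>i\<in>UNIV. real (mv (v $ i)) * CC q)"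
      have K0: "K \<ge> 0" unfolding K_def using B0 d(1) by (intro mult_nonneg_nonneg sum_nonneg) (auto simp: CC_def)
      obtain N :: nat where N: "N > 2 * K / r" using reals_Archimedean2 by blast
      have pt: "\<bar>f (X \<sigma>) - f c\<bar> \<le> r / 2 + 2 * B / d * (\<Sum>i\<in>UNIV. \<bar>X \<sigma> $ i - c $ i\<bar>)" for \<sigma>
      proof (cases "dist (X \<sigma>) c < d")
        case True
        then have "\<bar>f (X \<sigma>) - f c\<bar> < r / 2" using d(2) by (simp add: dist_real_def)
        moreover have "2 * B / d * (\<Sum>i\<in>UNIV. \<bar>X \<sigma> $ i - c $ i\<bar>) \<ge> 0"
          using B0 d(1) by (intro mult_nonneg_nonneg sum_nonneg) auto
        ultimately show ?thesis by linarith
      next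
        case False
        have "d \<le> norm (X \<sigma> - c)" using False by (simp add: dist_norm)
        also have "\<dots> \<le> (\<Sum>i\<in>UNIV. \<bar>(X \<sigma> - c) $ i\<bar>)" by (rule norm_le_l1_cart)
        finally have dl: "d \<le> (\<Sum>i\<in>UNIV. \<bar>X \<sigma> $ i - c $ i\<bar>)" by simp
        have "2 * B = 2 * B / d * d" using d(1) by simp
        also have "\<dots> \<le> 2 * B / d * (\<Sum>i\<in>UNIV. \<bar>X \<sigma> $ i - c $ i\<bar>)"
          using dl B0 d(1) by (intro mult_left_mono) auto
        finally have "2 * B \<le> 2 * B / d * (\<Sum>i\<in>UNIV. \<bar>X \<sigma> $ i - c $ i\<bar>)" .
        moreover have "\<bar>f (X \<sigma>) - f c\<bar> \<le> 2 * B" using B[of "X \<sigma>"] B[of c] by linarith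
        ultimately show ?thesis using r by linarith
      qed
      show "\<exists>no. \<forall>n\<ge>no. norm ((\<Sum>\<sigma>\<in>P n. pi_nq q n \<sigma> * f (X \<sigma>)) - f c) < r"
      proof (intro exI allI impI)
        fix n assume nN: "n \<ge> Suc N"
        then have n0: "n > 0" by simp
        have "(\<Sum>\<sigma>\<in>P n. pi_nq q n \<sigma> * f (X \<sigma>)) - f c = (\<Sum>\<sigma>\<in>P n. pi_nq q n \<sigma> * (f (X \<sigma>) - f c))"
        proof -
          have "(\<Sum>\<sigma>\<in>P n. pi_nq q n \<sigma> * (f (X \<sigma>) - f c)) = (\<Sum>\<sigma>\<in>P n. pi_nq q n \<sigma> * f (X \<sigma>)) - f c * (\<Sum>\<sigma>\<in>P n. pi_nq q n \<sigma>)"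
            by (simp add: algebra_simps sum_subtractf sum_distrib_left)
          then show ?thesis using pisum[of n] by simp
        qed
        then have "norm ((\<Sum>\<sigma>\<in>P n. pi_nq q n \<sigma> * f (X \<sigma>)) - f c) \<le> (\<Sum>\<sigma>\<in>P n. pi_nq q n \<sigma> * \<bar>f (X \<sigma>) - f c\<bar>)"
          using pinn by (simp add: sum_abs[THEN order_trans] abs_mult)
        also have "\<dots> \<le> (\<Sum>\<sigma>\<in>P n. pi_nq q n \<sigma> * (r / 2 + 2 * B / d * (\<Sum>i\<in>UNIV. \<bar>X \<sigma> $ i - c $ i\<bar>)))"
          using pt pinn by (intro sum_mono mult_left_mono) auto
        also have "\<dots> = r / 2 + 2 * B / d * (\<Sum>i\<in>UNIV. \<Sum>\<sigma>\<in>P n. pi_nq q n \<sigma> * \<bar>X \<sigma> $ i - c $ i\<bar>)"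
        proof -
          have "(\<Sum>\<sigma>\<in>P n. pi_nq q n \<sigma> * (r / 2 + 2 * B / d * (\<Sum>i\<in>UNIV. \<bar>X \<sigma> $ i - c $ i\<bar>)))
              = r / 2 * (\<Sum>\<sigma>\<in>P n. pi_nq q n \<sigma>) + 2 * B / d * (\<Sum>\<sigma>\<in>P n. \<Sum>i\<in>UNIV. pi_nq q n \<sigma> * \<bar>X \<sigma> $ i - c $ i\<bar>)"
            by (simp add: algebra_simps sum.distrib sum_distrib_left)
          also have "(\<Sum>\<sigma>\<in>P n. \<Sum>i\<in>UNIV. pi_nq q n \<sigma> * \<bar>X \<sigma> $ i - c $ i\<bar>) = (\<Sum>i\<in>UNIV. \<Sum>\<sigma>\<in>P n. pi_nq q n \<sigma> * \<bar>X \<sigma> $ i - c $ i\<bar>)"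
            by (rule sum.swap)
          finally show ?thesis using pisum[of n] by simp
        qed
        also have "\<dots> \<le> r / 2 + 2 * B / d * (\<Sum>i\<in>UNIV. real (mv (v $ i)) * CC q / real n)"
          using Ebound[OF n0] B0 d(1) by (intro add_left_mono mult_left_mono sum_mono) auto
        also have "\<dots> = r / 2 + K / real n"
          unfolding K_def by (simp add: sum_divide_distrib[symmetric])
        also have "\<dots> < r"
        proof -
          have "2 * K / r < real n" using N nN by linarith
          then have "2 * K < r * real n" using r by (simp add: field_simps)
          then have "K / real n < r / 2" using n0 by (simp add: field_simps)
          then show ?thesis by linarith
        qed
        finally show "norm ((\<Sum>\<sigma>\<in>P n. pi_nq q n \<sigma> * f (X \<sigma>)) - f c) < r" .
      qed
    qed
  qed
qed

end
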